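(* Let $S$ be a $d\times d$ symmetric positive semidefinite matrix with $S_{ii}>0$ for all $i$. For any $\rho>0$, the graphical lasso problem of minimizing $-\log\det K+\operatorname{tr}(SK)+\rho\sum_{i\ne j}|K_{ij}|$ over positive definite $K$ has an optimum, and it is unique. More generally, for symmetric $L,U$ with entries in $\mathbb{R}\cup\{\pm\infty\}$, $L_{ii}=U_{ii}=0$ and $L_{ij}<0<U_{ij}$ for all $i\ne j$, the problem of minimizing $-\log\det K+\operatorname{tr}(SK)+\sum_{i\neq j}\max\{L_{ij}K_{ij},U_{ij}K_{ij}\}$ over positive definite $K$ (convention $\pm\infty\cdot0=0$) has a unique optimum. *)

theory Defs
  imports "HOL-Analysis.Analysis" "HOL-Library.Extended_Real"
begin

definition sym_mat :: "('a::zero) ^'n^'n \<Rightarrow> bool" where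
  "sym_mat A \<longleftrightarrow> transpose A = A"

definition psd_mat :: "real^'n^'n \<Rightarrow> bool" where
  "psd_mat A \<longleftrightarrow> sym_mat A \<and> (\<forall>x. 0 \<le> x \<bullet> (A *v x))"

definition pd_mat :: "real^'n^'n \<Rightarrow> bool" where
  "pd_mat A \<longleftrightarrow> sym_mat A \<and> (\<forall>x. x \<noteq> 0 \<longrightarrow> 0 < x \<bullet> (A *v x))"

definition glasso_obj :: "real^'n^'n \<Rightarrow> real \<Rightarrow> real^'n^'n \<Rightarrow> real" where
  "glasso_obj S \<rho> K = - ln (det K) + trace (S ** K)
     + \<rho> * (\<Sum>i\<in>UNIV. \<Sum>j\<in>UNIV - {i}. \<bar>K $ i $ j\<bar>)"

text \<open>Generalized objective with extended-real box penalty (ereal: \<open>\<infinity> * 0 = 0\<close>).\<close>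
definition box_obj :: "real^'n^'n \<Rightarrow> ereal^'n^'n \<Rightarrow> ereal^'n^'n \<Rightarrow> real^'n^'n \<Rightarrow> ereal" where
  "box_obj S L U K = ereal (- ln (det K) + trace (S ** K))
     + (\<Sum>i\<in>UNIV. \<Sum>j\<in>UNIV - {i}.
          max (L $ i $ j * ereal (K $ i $ j)) (U $ i $ j * ereal (K $ i $ j)))"

end

theory Submission
  imports Defs
begin

lemma sym_dot:
  fixes A :: "real^'n^'n"
  assumes "sym_mat A"
  shows "(A *v x) \<bullet> y = x \<bullet> (A *v y)"
proof -
  have "(A *v x) \<bullet> y = (x v* transpose A) \<bullet> y" by (simp only: vector_transpose_matrix)
  also have "\<dots> = x \<bullet> (transpose A *v y)" by (rule dot_lmul_matrix)
  finally show ?thesis using assms unfolding sym_mat_def by metis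
qed

lemma cont_quad: "continuous_on S (\<lambda>x::real^'n. x \<bullet> (A *v x))"
  by (intro continuous_intros linear_continuous_on bounded_linear_inner_left matrix_vector_mul_bounded_linear)

lemma var_zero:
  fixes a b :: real
  assumes "\<And>t. 2 * t * a \<le> t^2 * b"
  shows "a = 0"
proof (rule ccontr)
  assume "a \<noteq> 0"
  define s where "s = 1 / (\<bar>b\<bar> + 1)"
  have s0: "s > 0" by (simp add: s_def)
  have "2 * (s*a) * a \<le> (s*a)^2 * b" by (rule assms)
  hence "a^2 * (2 * s) \<le> a^2 * (s^2 * b)" by (simp add: algebra_simps power2_eq_square)
  moreover have "a^2 > 0" using \<open>a \<noteq> 0\<close> by simp
  ultimately have "2 * s \<le> s^2 * b" by simp
  hence "s * 2 \<le> s * (s * b)" by (simp add: power2_eq_square algebra_simps)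
  hence "2 \<le> s * b" using s0 by simp
  moreover have "s * b < 1" using s0 by (simp add: s_def field_simps)
  ultimately show False by simp
qed

lemma spectral_aux:
  fixes A :: "real^'n^'n"
  assumes symA: "sym_mat A"
  shows "subspace V \<Longrightarrow> dim V = k \<Longrightarrow> (\<forall>x\<in>V. A *v x \<in> V) \<Longrightarrow>
    \<exists>B. B \<subseteq> V \<and> finite B \<and> card B = k \<and> (\<forall>b\<in>B. norm b = 1 \<and> (\<exists>l. A *v b = l *\<^sub>R b))
       \<and> (\<forall>b\<in>B. \<forall>c\<in>B. b \<noteq> c \<longrightarrow> b \<bullet> c = 0)"
proof (induction k arbitrary: V)
  case 0
  then show ?case by (intro exI[of _ "{}"]) auto
next
  case (Suc k)
  note V = Suc.prems
  let ?S = "V \<inter> sphere 0 1"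
  have "\<exists>u\<in>V. u \<noteq> 0"
  proof (rule ccontr)
    assume "\<not> ?thesis"
    hence "V \<subseteq> {0}" by auto
    hence "dim V = 0" by simp
    with V(2) show False by simp
  qed
  then obtain u where u: "u \<in> V" "u \<noteq> 0" by blast
  have "(1 / norm u) *\<^sub>R u \<in> ?S" using u V(1) by (simp add: subspace_scale)
  hence Sne: "?S \<noteq> {}" by blast
  have Scomp: "compact ?S" by (intro closed_Int_compact closed_subspace V(1) compact_sphere)
  obtain v where v: "v \<in> ?S" and vmax: "\<forall>y\<in>?S. y \<bullet> (A *v y) \<le> v \<bullet> (A *v v)"
    using continuous_attains_sup[OF Scomp Sne cont_quad] by blast
  define l where "l = v \<bullet> (A *v v)"
  have vV: "v \<in> V" and nv: "norm v = 1" using v by auto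
  have vv: "v \<bullet> v = 1" using nv by (simp add: norm_eq_1)
  define V' where "V' = {w \<in> V. \<forall>x \<in> span {v}. orthogonal x w}"
  have V'alt: "w \<in> V' \<longleftrightarrow> w \<in> V \<and> v \<bullet> w = 0" for w
    unfolding V'_def by (auto simp: span_singleton orthogonal_def)
  have quad_le: "x \<bullet> (A *v x) \<le> l * (x \<bullet> x)" if "x \<in> V" for x
  proof (cases "x = 0")
    case True then show ?thesis by simp
  next
    case False
    have "(1 / norm x) *\<^sub>R x \<in> ?S" using that False V(1) by (simp add: subspace_scale)
    hence "((1 / norm x) *\<^sub>R x) \<bullet> (A *v ((1 / norm x) *\<^sub>R x)) \<le> l" using vmax l_def by blast
    hence "(x \<bullet> (A *v x)) / (norm x)^2 \<le> l"
      by (simp add: matrix_vector_mult_scaleR inner_scaleR_left inner_scaleR_right power2_eq_square)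
    hence "x \<bullet> (A *v x) \<le> l * (norm x)^2" using False by (simp add: divide_le_eq)
    thus ?thesis by (simp add: power2_norm_eq_inner)
  qed
  have orth: "w \<bullet> (A *v v) = 0" if "w \<in> V'" for w
  proof -
    have wV: "w \<in> V" and wv: "v \<bullet> w = 0" using that V'alt by auto
    show ?thesis
    proof (rule var_zero[where b = "l * (w \<bullet> w) - w \<bullet> (A *v w)"])
      fix t :: real
      have "v + t *\<^sub>R w \<in> V" using vV wV V(1) by (simp add: subspace_add subspace_scale)
      hence e1: "(v + t *\<^sub>R w) \<bullet> (A *v (v + t *\<^sub>R w)) \<le> l * ((v + t *\<^sub>R w) \<bullet> (v + t *\<^sub>R w))"
        by (rule quad_le)
      have e2: "(v + t *\<^sub>R w) \<bullet> (A *v (v + t *\<^sub>R w)) = l + 2 * t * (w \<bullet> (A *v v)) + t^2 * (w \<bullet> (A *v w))"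
        using sym_dot[OF symA, of w v] inner_commute[of "A *v w" v]
        by (simp add: l_def matrix_vector_right_distrib matrix_vector_mult_scaleR inner_add_left inner_add_right
              inner_scaleR_left inner_scaleR_right power2_eq_square algebra_simps)
      have e3: "(v + t *\<^sub>R w) \<bullet> (v + t *\<^sub>R w) = 1 + t^2 * (w \<bullet> w)"
        using vv wv by (simp add: inner_add_left inner_add_right inner_commute power2_eq_square)
      have "l + 2 * t * (w \<bullet> (A *v v)) + t^2 * (w \<bullet> (A *v w)) \<le> l * (1 + t^2 * (w \<bullet> w))"
        using e1 unfolding e2 e3 .
      then show "2 * t * (w \<bullet> (A *v v)) \<le> t^2 * (l * (w \<bullet> w) - w \<bullet> (A *v w))"
        by (simp add: algebra_simps)
    qed
  qed
  have eig: "A *v v = l *\<^sub>R v"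
  proof -
    define z where "z = A *v v - l *\<^sub>R v"
    have "A *v v \<in> V" using V(3) vV by blast
    hence "z \<in> V" using vV V(1) by (simp add: z_def subspace_diff subspace_scale)
    moreover have "v \<bullet> z = 0" using vv by (simp add: z_def l_def inner_diff_right)
    ultimately have "z \<in> V'" using V'alt by blast
    hence "z \<bullet> (A *v v) = 0" by (rule orth)
    hence "z \<bullet> z = 0" using \<open>v \<bullet> z = 0\<close> by (simp add: z_def inner_diff_right inner_commute)
    thus ?thesis by (simp add: z_def)
  qed
  have subV': "subspace V'"
    unfolding subspace_def using V'alt V(1)
    by (auto simp: subspace_add subspace_scale subspace_0 inner_add_right)
  have invV': "\<forall>x\<in>V'. A *v x \<in> V'"
  proof
    fix x assume "x \<in> V'"
    hence xV: "x \<in> V" and "v \<bullet> x = 0" using V'alt by auto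
    have "v \<bullet> (A *v x) = (A *v v) \<bullet> x" using sym_dot[OF symA, of v x] by simp
    also have "\<dots> = 0" using eig \<open>v \<bullet> x = 0\<close> by (simp add: inner_commute)
    finally show "A *v x \<in> V'" using V'alt V(3) xV by blast
  qed
  have "dim V' + dim (span {v}) = dim V"
    unfolding V'_def by (rule dim_subspace_orthogonal_to_vectors) (use vV V(1) in \<open>auto simp: span_minimal\<close>)
  moreover have "dim (span {v}) = 1" using nv by (auto simp: dim_span dim_singleton)
  ultimately have dimV': "dim V' = k" using V(2) by simp
  obtain B where B: "B \<subseteq> V'" "finite B" "card B = k" "\<forall>b\<in>B. norm b = 1 \<and> (\<exists>l. A *v b = l *\<^sub>R b)"
    "\<forall>b\<in>B. \<forall>c\<in>B. b \<noteq> c \<longrightarrow> b \<bullet> c = 0"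
    using Suc.IH[OF subV' dimV' invV'] by blast
  have "v \<notin> B" using B(1) V'alt vv by auto
  show ?case
  proof (intro exI[of _ "insert v B"] conjI)
    show "insert v B \<subseteq> V" using B(1) vV V'alt by auto
    show "finite (insert v B)" using B(2) by simp
    show "card (insert v B) = Suc k" using B(2,3) \<open>v \<notin> B\<close> by simp
    show "\<forall>b\<in>insert v B. norm b = 1 \<and> (\<exists>l. A *v b = l *\<^sub>R b)" using B(4) nv eig by auto
    show "\<forall>b\<in>insert v B. \<forall>c\<in>insert v B. b \<noteq> c \<longrightarrow> b \<bullet> c = 0"
      using B(1,5) V'alt by (auto simp: inner_commute)
  qed
qed

definition diagm :: "real^'n \<Rightarrow> real^'n^'n" where
  "diagm d = (\<chi> i j. if i = j then d$i else 0)"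

lemma quad_entry:
  fixes X A Y :: "real^'n^'n"
  shows "(X ** A ** transpose Y)$i$j = X$i \<bullet> (A *v Y$j)"
proof -
  have "(X ** A ** transpose Y)$i$j = (\<Sum>k\<in>UNIV. (\<Sum>l\<in>UNIV. X$i$l * A$l$k) * Y$j$k)"
    by (simp add: matrix_matrix_mult_def transpose_def)
  also have "\<dots> = (\<Sum>k\<in>UNIV. \<Sum>l\<in>UNIV. X$i$l * (A$l$k * Y$j$k))"
    by (simp add: sum_distrib_right mult.assoc)
  also have "\<dots> = (\<Sum>l\<in>UNIV. \<Sum>k\<in>UNIV. X$i$l * (A$l$k * Y$j$k))"
    by (rule sum.swap)
  also have "\<dots> = X$i \<bullet> (A *v Y$j)"
    by (simp add: inner_vec_def matrix_vector_mult_def sum_distrib_left)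
  finally show ?thesis .
qed

lemma mult_transpose_entry:
  fixes X Y :: "real^'n^'n"
  shows "(X ** transpose Y)$i$j = X$i \<bullet> Y$j"
  by (simp add: matrix_matrix_mult_def transpose_def inner_vec_def mult.commute)

lemma spectral:
  fixes A :: "real^'n^'n"
  assumes symA: "sym_mat A"
  shows "\<exists>(P::real^'n^'n) d. P ** transpose P = mat 1 \<and> transpose P ** P = mat 1 \<and> P ** A ** transpose P = diagm d"
proof -
  obtain B where B: "finite B" "card B = CARD('n)" "\<forall>b\<in>B. norm b = 1 \<and> (\<exists>l. A *v b = l *\<^sub>R b)"
       "\<forall>b\<in>B. \<forall>c\<in>B. b \<noteq> c \<longrightarrow> b \<bullet> c = 0"
    using spectral_aux[OF symA, of UNIV "CARD('n)"] by auto
  obtain f where f: "bij_betw f (UNIV::'n set) B"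
    using bij_betw_iff_card[of "UNIV::'n set" B] B(1,2) by auto
  have fB: "f i \<in> B" for i using f by (auto simp: bij_betw_def)
  have finj: "f i = f j \<Longrightarrow> i = j" for i j using f by (auto simp: bij_betw_def inj_on_def)
  have fdot: "f i \<bullet> f j = (if i = j then 1 else 0)" for i j
  proof (cases "i = j")
    case True
    then show ?thesis using B(3) fB[of i] by (simp add: norm_eq_1)
  next
    case False
    then show ?thesis using B(4) fB[of i] fB[of j] finj by auto
  qed
  define P :: "real^'n^'n" where "P = (\<chi> i. f i)"
  define d :: "real^'n" where "d = (\<chi> j. f j \<bullet> (A *v f j))"
  have 1: "P ** transpose P = mat 1"
    by (simp add: vec_eq_iff mult_transpose_entry P_def fdot mat_def)
  have 2: "transpose P ** P = mat 1" using 1 matrix_left_right_inverse by blast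
  have 3: "P ** A ** transpose P = diagm d"
  proof -
    have "f i \<bullet> (A *v f j) = (if i = j then d$j else 0)" for i j
    proof -
      obtain l where "A *v f j = l *\<^sub>R f j" using B(3) fB[of j] by blast
      thus ?thesis using fdot[of i j] fdot[of j j] by (auto simp: d_def)
    qed
    thus ?thesis by (simp add: vec_eq_iff quad_entry P_def diagm_def)
  qed
  show ?thesis using 1 2 3 by blast
qed

lemma det_diagm: "det (diagm d) = (\<Prod>i\<in>UNIV. d$i)"
  by (subst det_diagonal) (auto simp: diagm_def)

lemma trace_diagm: "trace (diagm d) = (\<Sum>i\<in>UNIV. d$i)"
  by (simp add: trace_def diagm_def)

lemma spec_det:
  fixes A P :: "real^'n^'n"
  assumes "P ** transpose P = mat 1" "P ** A ** transpose P = diagm d"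
  shows "det A = (\<Prod>i\<in>UNIV. d$i)"
proof -
  have "det P * det P = 1" using arg_cong[OF assms(1), of det] by (simp add: det_mul)
  moreover have "det P * det A * det P = (\<Prod>i\<in>UNIV. d$i)"
    using arg_cong[OF assms(2), of det] by (simp add: det_mul det_diagm)
  ultimately show ?thesis by (metis mult.commute mult.left_commute mult_1_right)
qed

lemma spec_trace:
  fixes A P :: "real^'n^'n"
  assumes "transpose P ** P = mat 1" "P ** A ** transpose P = diagm d"
  shows "trace A = (\<Sum>i\<in>UNIV. d$i)"
proof -
  have "trace (P ** A ** transpose P) = trace (transpose P ** (P ** A))"
    by (rule trace_mul_sym)
  also have "\<dots> = trace A" by (simp add: matrix_mul_assoc assms(1))
  finally show ?thesis using assms(2) by (simp add: trace_diagm)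
qed

lemma spec_entry:
  fixes A P :: "real^'n^'n"
  assumes "P ** A ** transpose P = diagm d"
  shows "d$i = P$i \<bullet> (A *v P$i)"
  using arg_cong[OF assms, of "\<lambda>M. M$i$i"] by (simp add: quad_entry diagm_def)

lemma spec_row:
  fixes P :: "real^'n^'n"
  assumes "P ** transpose P = mat 1"
  shows "P$i \<noteq> 0"
proof
  assume "P$i = 0"
  have "(P ** transpose P)$i$i = 1" using assms by (simp add: mat_def)
  with \<open>P$i = 0\<close> show False by (simp add: mult_transpose_entry)
qed

lemma pd_det_pos:
  fixes K :: "real^'n^'n"
  assumes "pd_mat K"
  shows "det K > 0"
proof -
  obtain P :: "real^'n^'n" and d where P: "P ** transpose P = mat 1" "transpose P ** P = mat 1" "P ** K ** transpose P = diagm d"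
    using spectral[of K] assms unfolding pd_mat_def by auto
  have "d$i > 0" for i
  proof -
    have "0 < P$i \<bullet> (K *v P$i)" using assms spec_row[OF P(1), of i] unfolding pd_mat_def by blast
    then show ?thesis using spec_entry[OF P(3), of i] by simp
  qed
  thus ?thesis using spec_det[OF P(1) P(3)] by (simp add: prod_pos)
qed

lemma sum_delta_mult: fixes f g :: "'n::finite \<Rightarrow> real" shows "(\<Sum>k\<in>UNIV. (f k::real) * (if k = i then g k else 0)) = f i * g i"
proof -
  have "(\<Sum>k\<in>UNIV. (f k::real) * (if k = i then g k else 0)) = (\<Sum>k\<in>UNIV. if k = i then f k * g k else 0)"
    by (intro sum.cong) auto
  thus ?thesis by simp
qed

lemma trace_mult_diagm: "trace (Y ** diagm d) = (\<Sum>i\<in>UNIV. Y$i$i * d$i)"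
  by (simp add: trace_def matrix_matrix_mult_def diagm_def sum_delta_mult)

lemma psd_trace:
  fixes X K :: "real^'n^'n"
  assumes "psd_mat X" "psd_mat K"
  shows "trace (X ** K) \<ge> 0"
proof -
  obtain P :: "real^'n^'n" and d where P: "P ** transpose P = mat 1" "transpose P ** P = mat 1" "P ** K ** transpose P = diagm d"
    using spectral[of K] assms(2) unfolding psd_mat_def by auto
  have d0: "d$i \<ge> 0" for i using spec_entry[OF P(3), of i] assms(2) unfolding psd_mat_def by auto
  have K: "K = transpose P ** diagm d ** P"
  proof -
    have "transpose P ** (P ** K ** transpose P) ** P = (transpose P ** P) ** K ** (transpose P ** P)"
      by (simp add: matrix_mul_assoc)
    thus ?thesis using P by simp
  qed
  have "trace (X ** K) = trace ((X ** transpose P ** diagm d) ** P)" by (simp add: K matrix_mul_assoc)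
  also have "\<dots> = trace (P ** (X ** transpose P ** diagm d))" by (rule trace_mul_sym)
  also have "\<dots> = trace ((P ** X ** transpose P) ** diagm d)" by (simp add: matrix_mul_assoc)
  also have "\<dots> = (\<Sum>i\<in>UNIV. (P ** X ** transpose P)$i$i * d$i)" by (rule trace_mult_diagm)
  also have "\<dots> \<ge> 0"
    using assms(1) d0 unfolding psd_mat_def by (intro sum_nonneg mult_nonneg_nonneg) (auto simp: quad_entry)
  finally show ?thesis .
qed

lemma logdet_bound:
  fixes K :: "real^'n^'n"
  assumes "pd_mat K" "\<mu> > 0"
  shows "- ln (det K) + \<mu> * trace K \<ge> real CARD('n) * (1 + ln \<mu>)"
proof -
  obtain P :: "real^'n^'n" and d where P: "P ** transpose P = mat 1" "transpose P ** P = mat 1" "P ** K ** transpose P = diagm d"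
    using spectral[of K] assms unfolding pd_mat_def by auto
  have d0: "d$i > 0" for i using spec_entry[OF P(3), of i] spec_row[OF P(1), of i] assms
    unfolding pd_mat_def by auto
  have dn: "d$i \<noteq> 0" for i using d0[of i] by simp
  have "ln (det K) = (\<Sum>i\<in>UNIV. ln (d$i))"
    using spec_det[OF P(1) P(3)] dn by (simp add: ln_prod)
  moreover have "trace K = (\<Sum>i\<in>UNIV. d$i)" by (rule spec_trace[OF P(2) P(3)])
  ultimately have "- ln (det K) + \<mu> * trace K = (\<Sum>i\<in>UNIV. - ln (d$i) + \<mu> * d$i)"
    by (simp add: sum.distrib sum_negf sum_distrib_left sum_subtractf)
  also have "\<dots> \<ge> (\<Sum>i\<in>(UNIV::'n set). 1 + ln \<mu>)"
  proof (rule sum_mono)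
    fix i
    have "ln (\<mu> * d$i) \<le> \<mu> * d$i - 1" using assms(2) d0[of i] by (intro ln_le_minus_one) simp
    thus "1 + ln \<mu> \<le> - ln (d$i) + \<mu> * d$i" using assms(2) d0[of i] by (simp add: ln_mult)
  qed
  finally show ?thesis by simp
qed

lemma diagm_mult: "diagm a ** diagm b = diagm (\<chi> i. a$i * b$i)"
  by (simp add: vec_eq_iff matrix_matrix_mult_def diagm_def sum_delta_mult)

lemma transpose_diagm: "transpose (diagm a) = diagm a"
  by (simp add: vec_eq_iff transpose_def diagm_def)

lemma diagm_one: "diagm (\<chi> i. 1) = mat 1"
  by (simp add: vec_eq_iff diagm_def mat_def)

lemma dot_transpose: "x \<bullet> ((M::real^'n^'n) *v y) = (transpose M *v x) \<bullet> y"
  by (simp add: dot_lmul_matrix)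

lemma quad_congr:
  fixes R M :: "real^'n^'n"
  shows "x \<bullet> ((R ** M ** transpose R) *v x) = (transpose R *v x) \<bullet> (M *v (transpose R *v x))"
  by (simp add: matrix_vector_mul_assoc[symmetric] dot_transpose[of x R])

lemma congr_mid:
  fixes T A B :: "real^'n^'n"
  shows "T ** ((1/2) *\<^sub>R (A + B)) ** transpose T = (1/2) *\<^sub>R (T ** A ** transpose T + T ** B ** transpose T)"
proof -
  have e: "((1/2) *\<^sub>R (A + B)) *v y = (1/2) *\<^sub>R (A *v y + B *v y)" for y
    by (simp add: scaleR_matrix_vector_assoc[symmetric] matrix_vector_mult_add_rdistrib)
  show ?thesis unfolding vec_eq_iff quad_entry e by (simp add: inner_add_right quad_entry)
qed

lemma ln_mid:
  fixes m :: real
  assumes "m > 0"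
  shows "ln m / 2 \<le> ln ((1 + m) / 2)" and "m \<noteq> 1 \<Longrightarrow> ln m / 2 < ln ((1 + m) / 2)"
proof -
  have eq: "((1 + m)/2)^2 = m + ((m - 1)/2)^2" by (simp add: power2_eq_square field_simps)
  have "m \<le> ((1 + m)/2)^2" unfolding eq by simp
  hence "ln m \<le> ln (((1 + m)/2)^2)" using assms by simp
  also have "\<dots> = 2 * ln ((1 + m)/2)" using assms by (simp add: ln_realpow)
  finally show "ln m / 2 \<le> ln ((1 + m) / 2)" by simp
  assume "m \<noteq> 1"
  hence "((m - 1)/2)^2 > 0" by simp
  hence "m < ((1 + m)/2)^2" unfolding eq by simp
  hence "ln m < ln (((1 + m)/2)^2)" using assms by simp
  also have "\<dots> = 2 * ln ((1 + m)/2)" using assms by (simp add: ln_realpow)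
  finally show "ln m / 2 < ln ((1 + m) / 2)" by simp
qed

lemma symtest:
  fixes R B :: "real^'n^'n"
  assumes "sym_mat B"
  shows "sym_mat (R ** B ** transpose R)"
proof -
  have "transpose (R ** B ** transpose R) = transpose (transpose R) ** transpose (R ** B)"
    by (rule matrix_transpose_mul)
  also have "\<dots> = R ** (transpose B ** transpose R)" by (simp add: matrix_transpose_mul)
  also have "\<dots> = R ** B ** transpose R" using assms by (simp add: sym_mat_def matrix_mul_assoc)
  finally show ?thesis by (simp add: sym_mat_def)
qed

lemma logdet_strict:
  fixes A B :: "real^'n^'n"
  assumes pA: "pd_mat A" and pB: "pd_mat B" and ne: "A \<noteq> B"
  shows "ln (det ((1/2) *\<^sub>R (A + B))) > (ln (det A) + ln (det B)) / 2"
proof -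
  obtain Q :: "real^'n^'n" and a where Q: "Q ** transpose Q = mat 1" "transpose Q ** Q = mat 1" "Q ** A ** transpose Q = diagm a"
    using spectral[of A] pA unfolding pd_mat_def by auto
  have a0: "a$i > 0" for i
  proof -
    have "0 < Q$i \<bullet> (A *v Q$i)" using pA spec_row[OF Q(1), of i] unfolding pd_mat_def by blast
    then show ?thesis using spec_entry[OF Q(3), of i] by simp
  qed
  define s :: "real^'n" where "s = (\<chi> i. 1 / sqrt (a$i))"
  define R where "R = diagm s ** Q"
  have RA: "R ** A ** transpose R = mat 1"
  proof -
    have "R ** A ** transpose R = diagm s ** (Q ** A ** transpose Q) ** diagm s"
      by (simp add: R_def matrix_transpose_mul transpose_diagm matrix_mul_assoc)
    also have "\<dots> = diagm (\<chi> i. 1)"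
    proof -
      have "s$i * a$i * s$i = 1" for i
      proof -
        have "sqrt (a$i) * sqrt (a$i) = a$i" using a0[of i] by simp
        moreover have "sqrt (a$i) > 0" using a0[of i] by simp
        ultimately show ?thesis by (simp add: s_def field_simps)
      qed
      thus ?thesis by (simp add: Q(3) diagm_mult)
    qed
    finally show ?thesis by (simp add: diagm_one)
  qed
  define X where "X = R ** B ** transpose R"
  have symX: "sym_mat X" using pB unfolding X_def pd_mat_def by (simp add: symtest)
  have pX: "pd_mat X"
    unfolding pd_mat_def
  proof (intro conjI symX allI impI)
    fix x :: "real^'n" assume "x \<noteq> 0"
    have "transpose R *v x \<noteq> 0"
    proof
      assume h: "transpose R *v x = 0"
      have "x = (R ** A ** transpose R) *v x" by (simp only: RA matrix_vector_mul_lid)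
      also have "\<dots> = R *v (A *v (transpose R *v x))" by (simp only: matrix_vector_mul_assoc matrix_mul_assoc)
      also have "\<dots> = 0" unfolding h by simp
      finally show False using \<open>x \<noteq> 0\<close> by simp
    qed
    then show "0 < x \<bullet> (X *v x)" using pB unfolding X_def pd_mat_def quad_congr by blast
  qed
  obtain P :: "real^'n^'n" and m where P: "P ** transpose P = mat 1" "transpose P ** P = mat 1" "P ** X ** transpose P = diagm m"
    using spectral[of X] symX by auto
  have m0: "m$i > 0" for i
  proof -
    have "0 < P$i \<bullet> (X *v P$i)" using pX spec_row[OF P(1), of i] unfolding pd_mat_def by blast
    then show ?thesis using spec_entry[OF P(3), of i] by simp
  qed
  define T where "T = P ** R"
  have TA: "T ** A ** transpose T = mat 1"
  proof -
    have "T ** A ** transpose T = P ** (R ** A ** transpose R) ** transpose P"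
      by (simp add: T_def matrix_transpose_mul matrix_mul_assoc)
    thus ?thesis using RA P(1) by simp
  qed
  have TB: "T ** B ** transpose T = diagm m"
  proof -
    have "T ** B ** transpose T = P ** X ** transpose P"
      by (simp add: T_def X_def matrix_transpose_mul matrix_mul_assoc)
    thus ?thesis using P(3) by simp
  qed
  define M where "M = (1/2) *\<^sub>R (A + B)"
  have TM: "T ** M ** transpose T = diagm (\<chi> i. (1 + m$i) / 2)"
    unfolding M_def congr_mid TA TB
    by (simp add: vec_eq_iff diagm_def mat_def) 
  define t where "t = det T * det T"
  have tA: "t * det A = 1" using arg_cong[OF TA, of det] by (simp add: det_mul t_def mult_ac)
  have dA: "det A > 0" by (rule pd_det_pos[OF pA])
  have dB: "det B > 0" by (rule pd_det_pos[OF pB])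
  have t0: "t > 0" using tA dA by (metis zero_less_mult_pos2 zero_less_one)
  have tB: "t * det B = (\<Prod>i\<in>UNIV. m$i)" using arg_cong[OF TB, of det] by (simp add: det_mul t_def det_diagm mult_ac)
  have tM: "t * det M = (\<Prod>i\<in>UNIV. (1 + m$i) / 2)" using arg_cong[OF TM, of det] by (simp add: det_mul t_def det_diagm mult_ac)
  have mn: "m$i \<noteq> 0" for i using m0[of i] by simp
  have mn2: "(1 + m$i)/2 \<noteq> 0" for i using m0[of i] by simp
  have "ln t + ln (det A) = 0" using ln_mult_pos[OF t0 dA] tA by simp
  hence lA: "ln (det A) = - ln t" by simp
  have lB: "ln t + ln (det B) = (\<Sum>i\<in>UNIV. ln (m$i))"
  proof -
    have "ln t + ln (det B) = ln (\<Prod>i\<in>UNIV. m$i)" using ln_mult_pos[OF t0 dB] tB by simp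
    also have "\<dots> = (\<Sum>i\<in>UNIV. ln (m$i))" using mn by (simp add: ln_prod)
    finally show ?thesis .
  qed
  have "(\<Prod>i\<in>UNIV. (1 + m$i) / 2) > 0" using m0 by (intro prod_pos) (auto simp: add_pos_pos)
  hence "t * det M > 0" using tM by simp
  hence dM: "det M > 0" using t0 by (simp add: zero_less_mult_iff)
  have lM: "ln t + ln (det M) = (\<Sum>i\<in>UNIV. ln ((1 + m$i)/2))"
  proof -
    have "ln t + ln (det M) = ln (\<Prod>i\<in>UNIV. (1 + m$i)/2)" using ln_mult_pos[OF t0 dM] tM by simp
    also have "\<dots> = (\<Sum>i\<in>UNIV. ln ((1 + m$i)/2))" using mn2 by (simp add: ln_prod)
    finally show ?thesis .
  qed
  have ex1: "\<exists>i. m$i \<noteq> 1"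
  proof (rule ccontr)
    assume "\<not> ?thesis"
    hence "diagm m = mat 1" by (simp add: vec_eq_iff diagm_def mat_def)
    hence eq: "T ** B ** transpose T = T ** A ** transpose T" using TA TB by simp
    have "det T \<noteq> 0" using t0 t_def by auto
    then obtain T' where T': "T ** T' = mat 1" "T' ** T = mat 1"
      using invertible_det_nz[of T] unfolding invertible_def by blast
    have tt: "transpose T ** transpose T' = mat 1" using T'(2)
      by (metis matrix_transpose_mul transpose_mat)
    have "B = T' ** (T ** B ** transpose T) ** transpose T'"
      by (simp add: matrix_mul_assoc[symmetric] tt) (simp add: matrix_mul_assoc T'(2))
    also have "\<dots> = T' ** (T ** A ** transpose T) ** transpose T'" by (simp only: eq)
    also have "\<dots> = A"
      by (simp add: matrix_mul_assoc[symmetric] tt) (simp add: matrix_mul_assoc T'(2))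
    finally show False using ne by simp
  qed
  have "(\<Sum>i\<in>UNIV. ln (m$i) / 2) < (\<Sum>i\<in>UNIV. ln ((1 + m$i)/2))"
    using ex1 ln_mid m0 by (intro sum_strict_mono_ex1) auto
  hence "(ln t + ln (det B)) / 2 < ln t + ln (det M)"
    unfolding lB lM by (simp add: sum_divide_distrib)
  thus ?thesis using lA unfolding M_def by simp
qed

lemma entry_quad: "(K::real^'n^'n)$i$j = (mat 1::real^'n^'n)$i \<bullet> (K *v (mat 1::real^'n^'n)$j)"
  using quad_entry[of "mat 1" K "mat 1" i j] by simp

lemma psd_diag: "psd_mat K \<Longrightarrow> K$i$i \<ge> 0"
  unfolding psd_mat_def by (subst entry_quad) blast

lemma psd_trace_nonneg: "psd_mat K \<Longrightarrow> trace K \<ge> 0"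
  unfolding trace_def by (intro sum_nonneg) (simp add: psd_diag)

lemma sym_iff: "sym_mat (K::real^'n^'n) \<longleftrightarrow> (\<forall>i j. K$j$i = K$i$j)"
  by (auto simp: sym_mat_def vec_eq_iff transpose_def)

lemma quad_expand:
  fixes K :: "real^'n^'n"
  shows "(u + s *\<^sub>R v) \<bullet> (K *v (u + s *\<^sub>R v)) = u \<bullet> (K *v u) + s * (u \<bullet> (K *v v)) + s * (v \<bullet> (K *v u)) + s * s * (v \<bullet> (K *v v))"
  by (simp add: matrix_vector_right_distrib matrix_vector_mult_scaleR inner_add_left inner_add_right algebra_simps)

lemma psd_entry_bound:
  fixes K :: "real^'n^'n"
  assumes psd: "psd_mat K"
  shows "\<bar>K$i$j\<bar> \<le> trace K"
proof (cases "i = j")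
  case True
  have "K$i$i \<le> trace K" unfolding trace_def
    using psd_diag[OF psd] by (intro member_le_sum) auto
  thus ?thesis using True psd_diag[OF psd, of i] by simp
next
  case False
  define u where "u = (mat 1::real^'n^'n)$i"
  define v where "v = (mat 1::real^'n^'n)$j"
  have sy: "K$j$i = K$i$j" using psd unfolding psd_mat_def sym_iff by blast
  have e1: "u \<bullet> (K *v u) = K$i$i" unfolding u_def by (rule entry_quad[symmetric])
  have e2: "u \<bullet> (K *v v) = K$i$j" unfolding u_def v_def by (rule entry_quad[symmetric])
  have e3: "v \<bullet> (K *v u) = K$i$j" unfolding u_def v_def using sy by (metis entry_quad)
  have e4: "v \<bullet> (K *v v) = K$j$j" unfolding v_def by (rule entry_quad[symmetric])
  have "0 \<le> (u + 1 *\<^sub>R v) \<bullet> (K *v (u + 1 *\<^sub>R v))" using psd unfolding psd_mat_def by blast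
  hence h1: "0 \<le> K$i$i + 2 * K$i$j + K$j$j" unfolding quad_expand e1 e2 e3 e4 by simp
  have "0 \<le> (u + (-1) *\<^sub>R v) \<bullet> (K *v (u + (-1) *\<^sub>R v))" using psd unfolding psd_mat_def by blast
  hence h2: "0 \<le> K$i$i - 2 * K$i$j + K$j$j" unfolding quad_expand e1 e2 e3 e4 by simp
  have h3: "K$i$i + K$j$j \<le> trace K"
  proof -
    have "K$i$i + K$j$j = (\<Sum>k\<in>{i,j}. K$k$k)" using False by simp
    also have "\<dots> \<le> trace K" unfolding trace_def
      using psd_diag[OF psd] by (intro sum_mono2) auto
    finally show ?thesis .
  qed
  show ?thesis using h1 h2 h3 psd_diag[OF psd, of i] psd_diag[OF psd, of j] by linarith
qed

lemma cont_entry [continuous_intros]: "continuous_on S (\<lambda>K::real^'n^'n. K$i$j)"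
  by (intro continuous_intros)

lemma cont_det: "continuous_on S (det :: real^'n^'n \<Rightarrow> real)"
  unfolding det_def by (intro continuous_intros)

lemma quad_sum: "x \<bullet> ((K::real^'n^'n) *v x) = (\<Sum>i\<in>UNIV. \<Sum>j\<in>UNIV. x$i * (K$i$j * x$j))"
  by (simp add: inner_vec_def matrix_vector_mult_def sum_distrib_left)

lemma trace_expand: "trace ((X::real^'n^'n) ** K) = (\<Sum>i\<in>UNIV. \<Sum>k\<in>UNIV. X$i$k * K$k$i)"
  by (simp add: trace_def matrix_matrix_mult_def)

lemma closed_quad: "closed {K::real^'n^'n. 0 \<le> x \<bullet> (K *v x)}"
  unfolding quad_sum by (intro closed_Collect_le continuous_intros)

lemma closed_sym: "closed {K::real^'n^'n. sym_mat K}"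
  unfolding sym_iff by (intro closed_Collect_all closed_Collect_eq continuous_intros)

lemma closed_psd: "closed {K::real^'n^'n. psd_mat K}"
proof -
  have "{K::real^'n^'n. psd_mat K} = {K. sym_mat K} \<inter> (\<Inter>x. {K. 0 \<le> x \<bullet> (K *v x)})"
    unfolding psd_mat_def by auto
  moreover have "closed ({K::real^'n^'n. sym_mat K} \<inter> (\<Inter>x. {K. 0 \<le> x \<bullet> (K *v x)}))"
    by (intro closed_Int closed_INT closed_sym ballI closed_quad)
  ultimately show ?thesis by simp
qed

lemma psd_det_pd:
  fixes K :: "real^'n^'n"
  assumes psd: "psd_mat K" and dk: "det K \<noteq> 0"
  shows "pd_mat K"
  unfolding pd_mat_def
proof (intro conjI allI impI)
  show "sym_mat K" using psd psd_mat_def by blast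
  have symK: "sym_mat K" using psd psd_mat_def by blast
  fix x :: "real^'n" assume "x \<noteq> 0"
  show "0 < x \<bullet> (K *v x)"
  proof (rule ccontr)
    assume "\<not> ?thesis"
    hence x0: "x \<bullet> (K *v x) = 0" using psd unfolding psd_mat_def by (meson not_less order_antisym)
    have yz: "y \<bullet> (K *v x) = 0" for y
    proof -
    have "- (y \<bullet> (K *v x)) = 0"
    proof (rule var_zero[where b = "y \<bullet> (K *v y)"])
      fix t :: real
      have "0 \<le> (x + t *\<^sub>R y) \<bullet> (K *v (x + t *\<^sub>R y))" using psd unfolding psd_mat_def by blast
      also have "(x + t *\<^sub>R y) \<bullet> (K *v (x + t *\<^sub>R y)) = 2 * t * (y \<bullet> (K *v x)) + t^2 * (y \<bullet> (K *v y))"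
        using x0 sym_dot[OF symK, of y x] inner_commute[of "K *v y" x]
        by (simp add: matrix_vector_right_distrib matrix_vector_mult_scaleR inner_add_left inner_add_right
              power2_eq_square algebra_simps)
      finally show "2 * t * (- (y \<bullet> (K *v x))) \<le> t^2 * (y \<bullet> (K *v y))" by simp
    qed
    thus ?thesis by simp
    qed
    have Kx: "K *v x = 0" using yz[of "K *v x"] by simp
    obtain K' where K': "K' ** K = mat 1"
      using dk invertible_det_nz[of K] unfolding invertible_def by blast
    have "x = (K' ** K) *v x" by (simp add: K')
    also have "\<dots> = K' *v (K *v x)" by (simp only: matrix_vector_mul_assoc)
    also have "\<dots> = 0" by (simp add: Kx)
    finally have "x = 0" .
    thus False using \<open>x \<noteq> 0\<close> by simp
  qed
qed

lemma pd_mat_one: "pd_mat (mat 1 :: real^'n^'n)"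
  unfolding pd_mat_def sym_mat_def by simp

definition pen :: "('n \<Rightarrow> 'n \<Rightarrow> real \<Rightarrow> real) \<Rightarrow> real^'n^'n \<Rightarrow> real" where
  "pen p K = (\<Sum>i\<in>UNIV. \<Sum>j\<in>UNIV - {i}. p i j (K$i$j))"

definition gobj :: "real^'n^'n \<Rightarrow> ('n \<Rightarrow> 'n \<Rightarrow> real \<Rightarrow> real) \<Rightarrow> real^'n^'n \<Rightarrow> real" where
  "gobj S p K = - ln (det K) + trace (S ** K) + pen p K"

definition inF :: "('n \<Rightarrow> 'n \<Rightarrow> real set) \<Rightarrow> real^'n^'n \<Rightarrow> bool" where
  "inF Fs K \<longleftrightarrow> (\<forall>i j. i \<noteq> j \<longrightarrow> K$i$j \<in> Fs i j)"

lemma coercive: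
  fixes S :: "real^'n^'n"
  assumes psdS: "psd_mat S" and Sd: "\<forall>i. S$i$i > 0"
    and c0: "\<forall>i j. i \<noteq> j \<longrightarrow> c i j > 0"
    and pc: "\<forall>i j x. i \<noteq> j \<longrightarrow> x \<in> Fs i j \<longrightarrow> c i j * \<bar>x\<bar> \<le> p i j x"
  shows "\<exists>l0>0. \<forall>K. psd_mat K \<and> inF Fs K \<longrightarrow> l0 * trace K \<le> trace (S ** K) + pen p K"
proof -
  define e where "e i j = (if i = j then 1 else min 1 (c i j / (\<bar>S$i$j\<bar> + 1)))" for i j
  have e0: "e i j > 0" for i j using c0 by (auto simp: e_def)
  define eps where "eps = Min ((\<lambda>(i,j). e i j) ` (UNIV :: ('n \<times> 'n) set))"
  have fin: "finite ((\<lambda>(i,j). e i j) ` (UNIV :: ('n \<times> 'n) set))" by simp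
  have epsle: "eps \<le> e i j" for i j unfolding eps_def
    using fin by (intro Min_le) (auto intro: image_eqI[where x="(i,j)"])
  have eps0: "eps > 0" unfolding eps_def using fin e0 by (subst Min_gr_iff) auto
  have eps1: "eps \<le> 1" using epsle[of undefined undefined] by (simp add: e_def)
  have epsS: "eps * \<bar>S$i$j\<bar> \<le> c i j" if "i \<noteq> j" for i j
  proof -
    have "eps \<le> c i j / (\<bar>S$i$j\<bar> + 1)" using epsle[of i j] that by (simp add: e_def)
    hence "eps * (\<bar>S$i$j\<bar> + 1) \<le> c i j" by (simp add: field_simps add_pos_nonneg)
    moreover have "eps * \<bar>S$i$j\<bar> \<le> eps * (\<bar>S$i$j\<bar> + 1)" using eps0 by simp
    ultimately show ?thesis by linarith
  qed
  define s0 where "s0 = Min (range (\<lambda>i. S$i$i))"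
  have s0le: "s0 \<le> S$i$i" for i unfolding s0_def by (intro Min_le) auto
  have s00: "s0 > 0" unfolding s0_def using Sd by (subst Min_gr_iff) auto
  define l0 where "l0 = eps * s0"
  have l00: "l0 > 0" using eps0 s00 by (simp add: l0_def)
  have symS: "S$k$i = S$i$k" for i k using psdS unfolding psd_mat_def sym_iff by blast
  define Pm :: "real^'n^'n" where "Pm = (\<chi> i k. (1 - eps) * S$i$k + (if i = k then eps * S$i$i - l0 else 0))"
  have Pm_entry: "Pm$i$k = (1 - eps) * S$i$k + (if i = k then eps * S$i$i - l0 else 0)" for i k
    by (simp add: Pm_def)
  have psdPm: "psd_mat Pm"
    unfolding psd_mat_def
  proof (intro conjI allI)
    show "sym_mat Pm" unfolding sym_iff Pm_entry using symS by auto
    fix x :: "real^'n"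
    have t: "x$i * (Pm$i$j * x$j) = (1 - eps) * (x$i * (S$i$j * x$j)) + (if i = j then (eps * S$i$i - l0) * (x$i * x$i) else 0)" for i j
      by (auto simp: Pm_entry algebra_simps)
    have "x \<bullet> (Pm *v x) = (1 - eps) * (x \<bullet> (S *v x)) + (\<Sum>i\<in>UNIV. (eps * S$i$i - l0) * (x$i * x$i))"
      unfolding quad_sum t by (simp add: sum.distrib sum_distrib_left)
    also have "\<dots> \<ge> 0"
    proof -
      have "0 \<le> x \<bullet> (S *v x)" using psdS unfolding psd_mat_def by blast
      hence "0 \<le> (1 - eps) * (x \<bullet> (S *v x))" using eps1 by simp
      moreover have "0 \<le> (\<Sum>i\<in>UNIV. (eps * S$i$i - l0) * (x$i * x$i))"
      proof (rule sum_nonneg)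
        fix i
        have "0 \<le> eps * S$i$i - l0" using s0le[of i] eps0 unfolding l0_def
          by (simp add: mult_left_mono)
        thus "0 \<le> (eps * S$i$i - l0) * (x$i * x$i)" by simp
      qed
      ultimately show ?thesis by simp
    qed
    finally show "0 \<le> x \<bullet> (Pm *v x)" .
  qed
  show ?thesis
  proof (intro exI[of _ l0] conjI l00 allI impI)
    fix K :: "real^'n^'n"
    assume K: "psd_mat K \<and> inF Fs K"
    have symK: "K$k$i = K$i$k" for i k using K unfolding psd_mat_def sym_iff by blast
    have trPK: "trace (Pm ** K) \<ge> 0" using psd_trace psdPm K by blast
    define D where "D = (\<Sum>i\<in>UNIV. S$i$i * K$i$i)"
    define Off where "Off = (\<Sum>i\<in>UNIV. \<Sum>k\<in>UNIV - {i}. S$i$k * K$k$i)"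
    have tS: "trace (S ** K) = D + Off"
    proof -
      have "(\<Sum>k\<in>UNIV. S$i$k * K$k$i) = S$i$i * K$i$i + (\<Sum>k\<in>UNIV - {i}. S$i$k * K$k$i)" for i
        by (rule sum.remove) auto
      thus ?thesis unfolding trace_expand D_def Off_def by (simp add: sum.distrib)
    qed
    have tP: "trace (Pm ** K) = (1 - eps) * (D + Off) + eps * D - l0 * trace K"
    proof -
      have t: "Pm$i$k * K$k$i = (1 - eps) * (S$i$k * K$k$i) + (if i = k then (eps * S$i$i - l0) * K$i$i else 0)" for i k
        by (auto simp: Pm_entry algebra_simps)
      have "trace (Pm ** K) = (1 - eps) * trace (S ** K) + (\<Sum>i\<in>UNIV. (eps * S$i$i - l0) * K$i$i)"
        unfolding trace_expand t by (simp add: sum.distrib sum_distrib_left)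
      also have "\<dots> = (1 - eps) * (D + Off) + eps * D - l0 * trace K"
        unfolding tS by (simp add: D_def trace_def algebra_simps sum_subtractf sum_distrib_left sum.distrib)
      finally show ?thesis .
    qed
    have pO: "- (eps * Off) \<le> pen p K"
    proof -
      have "- (eps * Off) = (\<Sum>i\<in>UNIV. \<Sum>k\<in>UNIV - {i}. - (eps * (S$i$k * K$k$i)))"
        unfolding Off_def by (simp add: sum_distrib_left sum_negf)
      also have "\<dots> \<le> pen p K" unfolding pen_def
      proof (intro sum_mono)
        fix i k :: 'n assume "i \<in> UNIV" "k \<in> UNIV - {i}"
        hence ik: "i \<noteq> k" by auto
        have "- (eps * (S$i$k * K$k$i)) \<le> eps * (\<bar>S$i$k\<bar> * \<bar>K$i$k\<bar>)"
        proof -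
          have "- (S$i$k * K$k$i) \<le> \<bar>S$i$k * K$k$i\<bar>" by simp
          hence "eps * (- (S$i$k * K$k$i)) \<le> eps * \<bar>S$i$k * K$k$i\<bar>" using eps0 by (intro mult_left_mono) auto
          thus ?thesis using symK[of k i] by (simp add: abs_mult)
        qed
        also have "\<dots> = (eps * \<bar>S$i$k\<bar>) * \<bar>K$i$k\<bar>" by simp
        also have "\<dots> \<le> c i k * \<bar>K$i$k\<bar>" using epsS[OF ik] by (intro mult_right_mono) auto
        also have "\<dots> \<le> p i k (K$i$k)" using pc ik K unfolding inF_def by blast
        finally show "- (eps * (S$i$k * K$k$i)) \<le> p i k (K$i$k)" .
      qed
      finally show ?thesis .
    qed
    show "l0 * trace K \<le> trace (S ** K) + pen p K"
      using trPK tP tS pO eps0 by (simp add: algebra_simps)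
  qed
qed

lemma pd_psd: "pd_mat K \<Longrightarrow> psd_mat K"
  unfolding pd_mat_def psd_mat_def
  by (metis inner_zero_left less_eq_real_def order_refl)

lemma closed_inF:
  assumes "\<forall>i j. closed (Fs i j)"
  shows "closed {K::real^'n^'n. inF Fs K}"
  unfolding inF_def
proof (intro closed_Collect_all)
  fix i j :: 'n
  show "closed {K::real^'n^'n. i \<noteq> j \<longrightarrow> K$i$j \<in> Fs i j}"
  proof (cases "i = j")
    case True then show ?thesis by simp
  next
    case False
    have "{K::real^'n^'n. i \<noteq> j \<longrightarrow> K$i$j \<in> Fs i j} = (\<lambda>K. K$i) -` ((\<lambda>x. x$j) -` Fs i j)"
      using False by auto
    thus ?thesis using assms by (simp add: closed_vimage_vec_nth)
  qed
qed

lemma norm_mat_bound: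
  fixes K :: "real^'n^'n"
  assumes "\<forall>i j. \<bar>K$i$j\<bar> \<le> B"
  shows "norm K \<le> real CARD('n) * (real CARD('n) * B)"
proof -
  have "norm K \<le> (\<Sum>i\<in>UNIV. norm (K$i))"
    unfolding norm_vec_def by (rule L2_set_le_sum) simp
  also have "\<dots> \<le> (\<Sum>i\<in>(UNIV::'n set). real CARD('n) * B)"
  proof (rule sum_mono)
    fix i
    have "norm (K$i) \<le> (\<Sum>j\<in>UNIV. \<bar>K$i$j\<bar>)" by (rule norm_le_l1_cart)
    also have "\<dots> \<le> (\<Sum>j\<in>(UNIV::'n set). B)" using assms by (intro sum_mono) auto
    finally show "norm (K$i) \<le> real CARD('n) * B" by simp
  qed
  finally show ?thesis by simp
qed

lemma generic:
  fixes S :: "real^'n^'n" and p :: "'n \<Rightarrow> 'n \<Rightarrow> real \<Rightarrow> real"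
  assumes psdS: "psd_mat S" and Sd: "\<forall>i. S$i$i > 0"
    and Fcl: "\<forall>i j. closed (Fs i j)" and F0: "\<forall>i j. 0 \<in> Fs i j"
    and Fmid: "\<forall>i j x y. x \<in> Fs i j \<longrightarrow> y \<in> Fs i j \<longrightarrow> (x + y) / 2 \<in> Fs i j"
    and pcont: "\<forall>i j. continuous_on UNIV (p i j)"
    and pmid: "\<forall>i j x y. x \<in> Fs i j \<longrightarrow> y \<in> Fs i j \<longrightarrow> p i j ((x + y) / 2) \<le> (p i j x + p i j y) / 2"
    and c0: "\<forall>i j. i \<noteq> j \<longrightarrow> c i j > 0"
    and pc: "\<forall>i j x. i \<noteq> j \<longrightarrow> x \<in> Fs i j \<longrightarrow> c i j * \<bar>x\<bar> \<le> p i j x"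
  shows "\<exists>!K. pd_mat K \<and> inF Fs K \<and> (\<forall>K'. pd_mat K' \<and> inF Fs K' \<longrightarrow> gobj S p K \<le> gobj S p K')"
proof -
  obtain l0 where l00: "l0 > 0" and coer: "\<forall>K. psd_mat K \<and> inF Fs K \<longrightarrow> l0 * trace K \<le> trace (S ** K) + pen p K"
    using coercive[OF psdS Sd c0 pc] by blast
  define C0 where "C0 = gobj S p (mat 1)"
  define mm where "mm = real CARD('n) * (1 + ln (l0/2))"
  define Bd where "Bd = 2 * (C0 - mm) / l0"
  define dl where "dl = exp (- C0)"
  have dl0: "dl > 0" by (simp add: dl_def)
  have bounds: "trace K \<le> Bd \<and> dl \<le> det K" if "pd_mat K" "inF Fs K" "gobj S p K \<le> C0" for K
  proof -
    have psdK: "psd_mat K" using that(1) by (rule pd_psd)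
    have c: "l0 * trace K \<le> trace (S ** K) + pen p K" using coer psdK that(2) by blast
    have lb: "mm \<le> - ln (det K) + (l0/2) * trace K" unfolding mm_def
      by (rule logdet_bound[OF that(1)]) (simp add: l00)
    have g: "- ln (det K) + l0 * trace K \<le> C0" using c that(3) unfolding gobj_def by linarith
    have "(l0/2) * trace K \<le> C0 - mm" using lb g by linarith
    hence tb: "trace K \<le> Bd" unfolding Bd_def using l00 by (simp add: field_simps)
    have "0 \<le> l0 * trace K" using psd_trace_nonneg[OF psdK] l00 by simp
    hence "- ln (det K) \<le> C0" using g by linarith
    hence "exp (- C0) \<le> exp (ln (det K))" by simp
    hence "dl \<le> det K" using pd_det_pos[OF that(1)] unfolding dl_def by simp
    with tb show ?thesis by simp
  qed
  define C where "C = {K::real^'n^'n. psd_mat K \<and> inF Fs K \<and> (\<forall>i j. \<bar>K$i$j\<bar> \<le> Bd) \<and> dl \<le> det K}"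
  have inC: "K \<in> C" if "pd_mat K" "inF Fs K" "gobj S p K \<le> C0" for K
  proof -
    have psdK: "psd_mat K" using that(1) by (rule pd_psd)
    have "\<bar>K$i$j\<bar> \<le> Bd" for i j using psd_entry_bound[OF psdK, of i j] bounds[OF that] by linarith
    thus ?thesis unfolding C_def using psdK that(2) bounds[OF that] by blast
  qed
  have Cpd: "pd_mat K" if "K \<in> C" for K
  proof -
    have "det K \<noteq> 0" using that dl0 unfolding C_def by auto
    thus ?thesis using that psd_det_pd unfolding C_def by blast
  qed
  have CF: "inF Fs K" if "K \<in> C" for K using that unfolding C_def by blast
  have I_C: "mat 1 \<in> C"
    by (rule inC[OF pd_mat_one]) (auto simp: inF_def F0 C0_def mat_def)
  have compC: "compact C"
  proof (rule compact_eq_bounded_closed[THEN iffD2], rule conjI)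
    show "bounded C"
      unfolding bounded_iff
    proof (intro exI ballI)
      fix K assume "K \<in> C"
      hence "\<forall>i j. \<bar>K$i$j\<bar> \<le> Bd" unfolding C_def by blast
      thus "norm K \<le> real CARD('n) * (real CARD('n) * Bd)" by (rule norm_mat_bound)
    qed
    have e: "C = {K. psd_mat K} \<inter> {K. inF Fs K} \<inter> {K. \<forall>i j. \<bar>K$i$j\<bar> \<le> Bd} \<inter> {K. dl \<le> det K}"
      unfolding C_def by auto
    have c1: "closed {K::real^'n^'n. \<forall>i j. \<bar>K$i$j\<bar> \<le> Bd}"
      by (intro closed_Collect_all closed_Collect_le continuous_intros)
    have c2: "closed {K::real^'n^'n. dl \<le> det K}"
      by (intro closed_Collect_le continuous_intros cont_det)
    show "closed C" unfolding e by (intro closed_Int closed_psd closed_inF[OF Fcl] c1 c2)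
  qed
  have cp: "continuous_on C (\<lambda>K. p i j (K$i$j))" for i j
    using pcont by (intro continuous_on_compose2[of UNIV "p i j" C "\<lambda>K. K$i$j"] continuous_intros) auto
  have contC: "continuous_on C (gobj S p)"
    unfolding gobj_def[abs_def] trace_expand pen_def
  proof (intro continuous_intros cp cont_det ballI)
    fix K assume "K \<in> C"
    thus "det K \<noteq> 0" using dl0 unfolding C_def by auto
  qed
  obtain K0 where K0C: "K0 \<in> C" and K0min: "\<forall>K\<in>C. gobj S p K0 \<le> gobj S p K"
    using continuous_attains_inf[OF compC _ contC] I_C by blast
  have K0all: "gobj S p K0 \<le> gobj S p K'" if "pd_mat K'" "inF Fs K'" for K'
  proof (cases "gobj S p K' \<le> C0")
    case True
    then show ?thesis using inC[OF that True] K0min by blast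
  next
    case False
    have "gobj S p K0 \<le> C0" using K0min I_C unfolding C0_def by blast
    then show ?thesis using False by linarith
  qed
  show ?thesis
  proof (rule ex_ex1I)
    show "\<exists>K. pd_mat K \<and> inF Fs K \<and> (\<forall>K'. pd_mat K' \<and> inF Fs K' \<longrightarrow> gobj S p K \<le> gobj S p K')"
      using K0C Cpd CF K0all by blast
  next
    fix K1 K2
    assume H1: "pd_mat K1 \<and> inF Fs K1 \<and> (\<forall>K'. pd_mat K' \<and> inF Fs K' \<longrightarrow> gobj S p K1 \<le> gobj S p K')"
      and H2: "pd_mat K2 \<and> inF Fs K2 \<and> (\<forall>K'. pd_mat K' \<and> inF Fs K' \<longrightarrow> gobj S p K2 \<le> gobj S p K')"
    show "K1 = K2"
    proof (rule ccontr)
      assume ne: "K1 \<noteq> K2"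
      define M where "M = (1/2) *\<^sub>R (K1 + K2)"
      have Ment: "M$i$j = (K1$i$j + K2$i$j) / 2" for i j by (simp add: M_def)
      have Mv: "M *v x = (1/2) *\<^sub>R (K1 *v x + K2 *v x)" for x
        by (simp add: M_def scaleR_matrix_vector_assoc[symmetric] matrix_vector_mult_add_rdistrib)
      have pdM: "pd_mat M"
        unfolding pd_mat_def
      proof (intro conjI allI impI)
        show "sym_mat M" using H1 H2 unfolding sym_iff pd_mat_def Ment by simp
        fix x :: "real^'n" assume "x \<noteq> 0"
        hence "0 < x \<bullet> (K1 *v x)" "0 < x \<bullet> (K2 *v x)" using H1 H2 unfolding pd_mat_def by blast+
        thus "0 < x \<bullet> (M *v x)" unfolding Mv by (simp add: inner_add_right)
      qed
      have FM: "inF Fs M" using H1 H2 Fmid unfolding inF_def Ment by blast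
      have eq12: "gobj S p K1 = gobj S p K2" using H1 H2 by (meson order_antisym)
      have l: "ln (det M) > (ln (det K1) + ln (det K2)) / 2"
        unfolding M_def using H1 H2 ne by (intro logdet_strict) auto
      have t: "trace (S ** M) = (trace (S ** K1) + trace (S ** K2)) / 2"
      proof -
        have tt: "S$i$k * M$k$i = (S$i$k * K1$k$i + S$i$k * K2$k$i) / 2" for i k
          by (simp add: Ment algebra_simps)
        show ?thesis unfolding trace_expand tt
          by (simp add: sum_divide_distrib[symmetric] sum.distrib)
      qed
      have pp: "pen p M \<le> (pen p K1 + pen p K2) / 2"
      proof -
        have "pen p M \<le> (\<Sum>i\<in>UNIV. \<Sum>j\<in>UNIV - {i}. (p i j (K1$i$j) + p i j (K2$i$j)) / 2)"
          unfolding pen_def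
        proof (intro sum_mono)
          fix i j :: 'n assume "i \<in> UNIV" "j \<in> UNIV - {i}"
          hence "i \<noteq> j" by auto
          hence "K1$i$j \<in> Fs i j" "K2$i$j \<in> Fs i j" using H1 H2 unfolding inF_def by blast+
          thus "p i j (M$i$j) \<le> (p i j (K1$i$j) + p i j (K2$i$j)) / 2"
            unfolding Ment using pmid by blast
        qed
        also have "\<dots> = (pen p K1 + pen p K2) / 2"
          unfolding pen_def by (simp add: sum_divide_distrib[symmetric] sum.distrib)
        finally show ?thesis .
      qed
      have "gobj S p M < (gobj S p K1 + gobj S p K2) / 2"
        unfolding gobj_def using l t pp by (simp add: field_simps)
      also have "\<dots> = gobj S p K1" using eq12 by simp
      finally have "gobj S p M < gobj S p K1" .
      moreover have "gobj S p K1 \<le> gobj S p M" using H1 pdM FM by blast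
      ultimately show False by simp
    qed
  qed
qed

lemma box_term:
  fixes Lv Uv :: ereal and x :: real
  assumes L0: "Lv < 0" and U0: "0 < Uv"
    and F: "F = (if Lv = -\<infinity> then {0..} else UNIV) \<inter> (if Uv = \<infinity> then {..0} else UNIV)"
  shows "x \<in> F \<Longrightarrow> max (Lv * ereal x) (Uv * ereal x) = ereal (max (real_of_ereal Lv * x) (real_of_ereal Uv * x))"
    and "x \<notin> F \<Longrightarrow> max (Lv * ereal x) (Uv * ereal x) = \<infinity>"
proof -
  have Lc: "Lv = -\<infinity> \<or> (\<exists>l. Lv = ereal l \<and> l < 0)" using L0 by (cases Lv) auto
  have Uc: "Uv = \<infinity> \<or> (\<exists>u. Uv = ereal u \<and> u > 0)" using U0 by (cases Uv) auto
  have xc: "x < 0 \<or> x = 0 \<or> x > 0" by linarith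
  show "x \<in> F \<Longrightarrow> max (Lv * ereal x) (Uv * ereal x) = ereal (max (real_of_ereal Lv * x) (real_of_ereal Uv * x))"
    using Lc Uc xc unfolding F by (auto simp: max_def zero_le_mult_iff mult_le_0_iff)
  show "x \<notin> F \<Longrightarrow> max (Lv * ereal x) (Uv * ereal x) = \<infinity>"
    using Lc Uc xc unfolding F by (auto simp: max_def)
qed

lemma max_mid:
  fixes l u x y :: real
  shows "max (l * ((x + y) / 2)) (u * ((x + y) / 2)) \<le> (max (l * x) (u * x) + max (l * y) (u * y)) / 2"
proof -
  have a: "l * ((x + y) / 2) = (l * x + l * y) / 2" "u * ((x + y) / 2) = (u * x + u * y) / 2"
    by (simp_all add: algebra_simps)
  show ?thesis unfolding a by (auto simp: max_def)
qed

lemma glasso_part: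
  fixes S :: "real^'n^'n"
  assumes "psd_mat S" and "\<forall>i. S $ i $ i > 0" and r: "\<rho> > 0"
  shows "\<exists>!K. pd_mat K \<and> (\<forall>K'. pd_mat K' \<longrightarrow> glasso_obj S \<rho> K \<le> glasso_obj S \<rho> K')"
proof -
  have pm: "\<rho> * \<bar>(x + y) / 2\<bar> \<le> (\<rho> * \<bar>x\<bar> + \<rho> * \<bar>y\<bar>) / 2" for x y :: real
  proof -
    have "\<bar>(x + y) / 2\<bar> \<le> (\<bar>x\<bar> + \<bar>y\<bar>) / 2" using abs_triangle_ineq[of x y] by simp
    hence "\<rho> * \<bar>(x + y) / 2\<bar> \<le> \<rho> * ((\<bar>x\<bar> + \<bar>y\<bar>) / 2)" using r by (intro mult_left_mono) auto
    thus ?thesis by (simp add: algebra_simps)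
  qed
  have ct: "continuous_on UNIV (\<lambda>x::real. \<rho> * \<bar>x\<bar>)" by (intro continuous_intros)
  have G: "\<exists>!K. pd_mat K \<and> inF (\<lambda>i j. UNIV) K \<and> (\<forall>K'. pd_mat K' \<and> inF (\<lambda>i j. UNIV) K' \<longrightarrow>
      gobj S (\<lambda>i j x. \<rho> * \<bar>x\<bar>) K \<le> gobj S (\<lambda>i j x. \<rho> * \<bar>x\<bar>) K')"
    by (rule generic[where c = "\<lambda>i j. \<rho>"]) (use assms pm ct in auto)
  have eq: "gobj S (\<lambda>i j x. \<rho> * \<bar>x\<bar>) K = glasso_obj S \<rho> K" for K
    unfolding gobj_def pen_def glasso_obj_def by (simp add: sum_distrib_left)
  have iF: "inF (\<lambda>i j. UNIV) K" for K by (simp add: inF_def)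
  show ?thesis using G unfolding eq by (simp add: iF)
qed

lemma box_part:
  fixes S :: "real^'n^'n" and L U :: "ereal^'n^'n"
  assumes psdS: "psd_mat S" and Sd: "\<forall>i. S $ i $ i > 0"
    and LU: "\<forall>i j. i \<noteq> j \<longrightarrow> L $ i $ j < 0 \<and> 0 < U $ i $ j"
  shows "\<exists>!K. pd_mat K \<and> (\<forall>K'. pd_mat K' \<longrightarrow> box_obj S L U K \<le> box_obj S L U K')"
proof -
  define Fs where "Fs i j = (if L$i$j = -\<infinity> then {0..} else UNIV) \<inter> (if U$i$j = \<infinity> then {..0::real} else UNIV)" for i j
  define p where "p i j x = max (real_of_ereal (L$i$j) * x) (real_of_ereal (U$i$j) * x)" for i j x
  define c where "c i j = min (if L$i$j = -\<infinity> then 1 else - real_of_ereal (L$i$j)) (if U$i$j = \<infinity> then 1 else real_of_ereal (U$i$j))" for i j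
  have Fcl: "\<forall>i j. closed (Fs i j)" unfolding Fs_def by (auto intro!: closed_Int)
  have F0: "\<forall>i j. 0 \<in> Fs i j" by (simp add: Fs_def)
  have Fmid: "\<forall>i j x y. x \<in> Fs i j \<longrightarrow> y \<in> Fs i j \<longrightarrow> (x + y) / 2 \<in> Fs i j" by (auto simp: Fs_def)
  have pcont: "\<forall>i j. continuous_on UNIV (p i j)" unfolding p_def[abs_def] by (intro allI continuous_intros)
  have pmid: "\<forall>i j x y. x \<in> Fs i j \<longrightarrow> y \<in> Fs i j \<longrightarrow> p i j ((x + y) / 2) \<le> (p i j x + p i j y) / 2"
    unfolding p_def using max_mid by blast
  have c0: "\<forall>i j. i \<noteq> j \<longrightarrow> c i j > 0"
  proof (intro allI impI)
    fix i j :: 'n assume "i \<noteq> j"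
    hence L0: "L$i$j < 0" and U0: "0 < U$i$j" using LU by auto
    have "L$i$j \<noteq> -\<infinity> \<Longrightarrow> - real_of_ereal (L$i$j) > 0" using L0 by (cases "L$i$j") auto
    moreover have "U$i$j \<noteq> \<infinity> \<Longrightarrow> real_of_ereal (U$i$j) > 0" using U0 by (cases "U$i$j") auto
    ultimately show "c i j > 0" unfolding c_def by auto
  qed
  have pc: "\<forall>i j x. i \<noteq> j \<longrightarrow> x \<in> Fs i j \<longrightarrow> c i j * \<bar>x\<bar> \<le> p i j x"
  proof (intro allI impI)
    fix i j :: 'n and x :: real assume ij: "i \<noteq> j" and xF: "x \<in> Fs i j"
    hence L0: "L$i$j < 0" and U0: "0 < U$i$j" using LU by auto
    define l where "l = real_of_ereal (L$i$j)"
    define u where "u = real_of_ereal (U$i$j)"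
    have pe: "p i j x = max (l * x) (u * x)" by (simp add: p_def l_def u_def)
    show "c i j * \<bar>x\<bar> \<le> p i j x"
    proof (cases "x = 0")
      case True then show ?thesis using pe by simp
    next
      case False
      show ?thesis
      proof (cases "x > 0")
        case True
        hence "U$i$j \<noteq> \<infinity>" using xF by (auto simp: Fs_def)
        hence "c i j \<le> u" unfolding c_def u_def by simp
        hence A: "c i j * x \<le> u * x" using True by (intro mult_right_mono) auto
        have B: "u * x \<le> max (l * x) (u * x)" by simp
        have ax: "\<bar>x\<bar> = x" using True by simp
        show ?thesis unfolding pe ax using A B by linarith
      next
        case False
        hence xn: "x < 0" using \<open>x \<noteq> 0\<close> by simp
        hence "L$i$j \<noteq> -\<infinity>" using xF by (auto simp: Fs_def)
        hence "c i j \<le> - l" unfolding c_def l_def by simp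
        hence A: "c i j * (- x) \<le> (- l) * (- x)" using xn by (intro mult_right_mono) auto
        have B: "l * x \<le> max (l * x) (u * x)" by simp
        have ax: "\<bar>x\<bar> = - x" using xn by simp
        show ?thesis unfolding pe ax using A B by simp
      qed
    qed
  qed
  have G: "\<exists>!K. pd_mat K \<and> inF Fs K \<and> (\<forall>K'. pd_mat K' \<and> inF Fs K' \<longrightarrow> gobj S p K \<le> gobj S p K')"
    by (rule generic[OF psdS Sd Fcl F0 Fmid pcont pmid c0 pc])
  have tF: "max (L$i$j * ereal x) (U$i$j * ereal x) = ereal (p i j x)" if "i \<noteq> j" "x \<in> Fs i j" for i j x
    using box_term(1)[of "L$i$j" "U$i$j" "Fs i j" x] LU that unfolding p_def Fs_def by auto
  have tN: "max (L$i$j * ereal x) (U$i$j * ereal x) = \<infinity>" if "i \<noteq> j" "x \<notin> Fs i j" for i j x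
    using box_term(2)[of "L$i$j" "U$i$j" "Fs i j" x] LU that unfolding Fs_def by auto
  have boxF: "box_obj S L U K = ereal (gobj S p K)" if "inF Fs K" for K
  proof -
    have "(\<Sum>i\<in>UNIV. \<Sum>j\<in>UNIV - {i}. max (L$i$j * ereal (K$i$j)) (U$i$j * ereal (K$i$j)))
        = (\<Sum>i\<in>UNIV. \<Sum>j\<in>UNIV - {i}. ereal (p i j (K$i$j)))"
      by (intro sum.cong refl) (use tF that in \<open>auto simp: inF_def\<close>)
    also have "\<dots> = ereal (pen p K)" by (simp add: pen_def)
    finally show ?thesis by (simp add: box_obj_def gobj_def)
  qed
  have boxN: "box_obj S L U K = \<infinity>" if nF: "\<not> inF Fs K" for K
  proof -
    obtain i j where ij: "i \<noteq> j" "K$i$j \<notin> Fs i j" using nF by (auto simp: inF_def)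
    have "(\<Sum>j\<in>UNIV - {i}. max (L$i$j * ereal (K$i$j)) (U$i$j * ereal (K$i$j))) = \<infinity>"
      using tN[OF ij] ij by (subst sum_Pinfty) auto
    hence "(\<Sum>i\<in>UNIV. \<Sum>j\<in>UNIV - {i}. max (L$i$j * ereal (K$i$j)) (U$i$j * ereal (K$i$j))) = \<infinity>"
      by (subst sum_Pinfty) auto
    thus ?thesis by (simp add: box_obj_def)
  qed
  obtain K0 where K0: "pd_mat K0 \<and> inF Fs K0 \<and> (\<forall>K'. pd_mat K' \<and> inF Fs K' \<longrightarrow> gobj S p K0 \<le> gobj S p K')"
    and uniq: "\<And>K. pd_mat K \<and> inF Fs K \<and> (\<forall>K'. pd_mat K' \<and> inF Fs K' \<longrightarrow> gobj S p K \<le> gobj S p K') \<Longrightarrow> K = K0"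
    using G by (metis (no_types, lifting))
  show ?thesis
  proof (rule ex1I[of _ K0])
    show "pd_mat K0 \<and> (\<forall>K'. pd_mat K' \<longrightarrow> box_obj S L U K0 \<le> box_obj S L U K')"
    proof (intro conjI allI impI)
      show "pd_mat K0" using K0 by blast
      fix K' :: "real^'n^'n" assume "pd_mat K'"
      show "box_obj S L U K0 \<le> box_obj S L U K'"
      proof (cases "inF Fs K'")
        case True
        then show ?thesis using K0 \<open>pd_mat K'\<close> boxF by simp
      next
        case False
        then show ?thesis using boxN by simp
      qed
    qed
  next
    fix K assume H: "pd_mat K \<and> (\<forall>K'. pd_mat K' \<longrightarrow> box_obj S L U K \<le> box_obj S L U K')"
    have "box_obj S L U K \<le> box_obj S L U K0" using H K0 by blast
    hence FK: "inF Fs K" using boxN[of K] boxF[of K0] K0 by (metis PInfty_neq_ereal(1) ereal_infty_less_eq(1))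
    have "gobj S p K \<le> gobj S p K'" if "pd_mat K'" "inF Fs K'" for K'
      using H that boxF[OF FK] boxF[OF that(2)] by (metis ereal_less_eq(3))
    thus "K = K0" using uniq H FK by blast
  qed
qed

theorem theorem8p7:
  fixes S :: "real^'n^'n"
  assumes "psd_mat S" and "\<forall>i. S $ i $ i > 0"
  shows "(\<forall>\<rho>::real. \<rho> > 0 \<longrightarrow>
           (\<exists>!K. pd_mat K \<and> (\<forall>K'. pd_mat K' \<longrightarrow> glasso_obj S \<rho> K \<le> glasso_obj S \<rho> K')))
       \<and> (\<forall>L U :: ereal^'n^'n.
           sym_mat L \<and> sym_mat U \<and> (\<forall>i. L $ i $ i = 0 \<and> U $ i $ i = 0)
           \<and> (\<forall>i j. i \<noteq> j \<longrightarrow> L $ i $ j < 0 \<and> 0 < U $ i $ j) \<longrightarrow>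
           (\<exists>!K. pd_mat K \<and> (\<forall>K'. pd_mat K' \<longrightarrow> box_obj S L U K \<le> box_obj S L U K')))"
proof (intro conjI allI impI)
  fix \<rho> :: real assume "\<rho> > 0"
  then show "\<exists>!K. pd_mat K \<and> (\<forall>K'. pd_mat K' \<longrightarrow> glasso_obj S \<rho> K \<le> glasso_obj S \<rho> K')"
    by (rule glasso_part[OF assms])
next
  fix L U :: "ereal^'n^'n"
  assume h: "sym_mat L \<and> sym_mat U \<and> (\<forall>i. L $ i $ i = 0 \<and> U $ i $ i = 0)
           \<and> (\<forall>i j. i \<noteq> j \<longrightarrow> L $ i $ j < 0 \<and> 0 < U $ i $ j)"
  show "\<exists>!K. pd_mat K \<and> (\<forall>K'. pd_mat K' \<longrightarrow> box_obj S L U K \<le> box_obj S L U K')"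
  proof (rule box_part[OF assms])
    show "\<forall>i j. i \<noteq> j \<longrightarrow> L $ i $ j < 0 \<and> 0 < U $ i $ j" using h by (elim conjE)
  qed
qed

end
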